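(* Consider the model without monotonicity, parametrized by $\boldsymbol{\xi}=(\boldsymbol{p},\boldsymbol{\alpha},\boldsymbol{\pi},\boldsymbol{\delta})$ ranging over the open set $\Xi$ where $\boldsymbol{p}=(p_1,\dots,p_{N_R})$ lies in the open probability simplex, $\alpha_r\in(0,1)$ for each $r$, $\boldsymbol{\pi}_r=(\pi_{ss,r},\pi_{s\bar{s},r},\pi_{\bar{s}\bar{s},r},\pi_{\bar{s}s,r})$ lies in the open probability simplex for each $r$, and $\delta_{zu}\in(0,1)$ for $z\in\{0,1\}$, $u\in\{ss,s\bar{s},\bar{s}\bar{s},\bar{s}s\}$ (so $\Xi$ has dimension $5N_R+7$). Let $f:\Xi\to\mathbb{R}^{8N_R}$ map $\boldsymbol{\xi}$ to the observed cell probabilities $$P(R=r,Z=z,S=s,Y=y)=p_r\,\alpha_r^{z}(1-\alpha_r)^{1-z}\sum_{u\in O(z,s)}\pi_{ur}\,\delta_{zu}^{y}(1-\delta_{zu})^{1-y},$$ for $r\in\{1,\dots,N_R\}$, $z,s,y\in\{0,1\}$. If $N_R\le 2$, then $\boldsymbol{\xi}$ is not locally identifiable at any $\boldsymbol{\xi}_0\in\Xi$: every neighborhood of $\boldsymbol{\xi}_0$ contains some $\boldsymbol{\xi}\neq\boldsymbol{\xi}_0$ with $f(\boldsymbol{\xi})=f(\boldsymbol{\xi}_0)$. Consequently $N_R\ge 3$ is necessary for local identifiability.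
   Context: This parametrization is the joint distribution of $(R,Z,U,Y)$ implied by Assumption 1 (randomization: $Z\perp\!\!\!\perp\{S(1),S(0),Y(1),Y(0)\}\mid R$) and Assumption 3 (homogeneity: $R\perp\!\!\!\perp Y(z)\mid U$), with $p_r=P(R=r)$, $\alpha_r=P(Z=1\mid R=r)$, $\pi_{ur}=P(U=u\mid R=r)$, $\delta_{zu}=P(Y=1\mid Z=z,U=u)$. Here $U=(S(1),S(0))$ with values $(1,1),(1,0),(0,1),(0,0)$ labeled $ss,s\bar{s},\bar{s}s,\bar{s}\bar{s}$, and $S=S(Z)$. $O(z,s)$ is the set of strata compatible with observing $Z=z,S=s$: $O(1,1)=\{ss,s\bar{s}\}$, $O(1,0)=\{\bar{s}\bar{s},\bar{s}s\}$, $O(0,1)=\{ss,\bar{s}s\}$, $O(0,0)=\{s\bar{s},\bar{s}\bar{s}\}$. The observed cell probabilities sum to one, so they lie in an affine space of dimension $8N_R-1$. *)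

theory Defs
  imports Complex_Main
begin

text \<open>Principal strata U = (S(1),S(0)): ss, s sbar, sbar sbar, sbar s.\<close>
datatype stratum = SS | SSb | SbSb | SbS

fun Ostr :: "nat \<Rightarrow> nat \<Rightarrow> stratum set" where
  "Ostr z s = (if z = 1 then (if s = 1 then {SS, SSb} else {SbSb, SbS})
               else (if s = 1 then {SS, SbS} else {SSb, SbSb}))"

text \<open>Coordinates of the parameter xi = (p, alpha, pi, delta).\<close>
datatype coord = Pc nat | Ac nat | Pic stratum nat | Dc nat stratum

text \<open>The coordinates actually used when there are N strata of R (r = 1..N).\<close>
definition coords :: "nat \<Rightarrow> coord set" where
  "coords N = Pc ` {1..N} \<union> Ac ` {1..N} \<union> {Pic u r | u r. r \<in> {1..N}}
              \<union> {Dc z u | z u. z \<in> {0,1}}"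

definition Xi :: "nat \<Rightarrow> (coord \<Rightarrow> real) set" where
  "Xi N = {xi.
     (\<forall>r\<in>{1..N}. xi (Pc r) > 0) \<and> (\<Sum>r=1..N. xi (Pc r)) = 1 \<and>
     (\<forall>r\<in>{1..N}. 0 < xi (Ac r) \<and> xi (Ac r) < 1) \<and>
     (\<forall>r\<in>{1..N}. (\<forall>u. xi (Pic u r) > 0) \<and> (\<Sum>u\<in>UNIV. xi (Pic u r)) = 1) \<and>
     (\<forall>z\<in>{0,1}. \<forall>u. 0 < xi (Dc z u) \<and> xi (Dc z u) < 1)}"

definition cellprob :: "(coord \<Rightarrow> real) \<Rightarrow> nat \<Rightarrow> nat \<Rightarrow> nat \<Rightarrow> nat \<Rightarrow> real" where
  "cellprob xi r z s y =
     xi (Pc r) * xi (Ac r) ^ z * (1 - xi (Ac r)) ^ (1 - z) *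
     (\<Sum>u\<in>Ostr z s. xi (Pic u r) * xi (Dc z u) ^ y * (1 - xi (Dc z u)) ^ (1 - y))"

definition same_obs :: "nat \<Rightarrow> (coord \<Rightarrow> real) \<Rightarrow> (coord \<Rightarrow> real) \<Rightarrow> bool" where
  "same_obs N xi xi' = (\<forall>r\<in>{1..N}. \<forall>z\<in>{0,1}. \<forall>s\<in>{0,1}. \<forall>y\<in>{0,1}.
      cellprob xi r z s y = cellprob xi' r z s y)"

definition locally_identifiable :: "nat \<Rightarrow> (coord \<Rightarrow> real) \<Rightarrow> bool" where
  "locally_identifiable N xi0 = (\<exists>e>0. \<forall>xi\<in>Xi N.
      (\<forall>c\<in>coords N. \<bar>xi c - xi0 c\<bar> < e) \<and> same_obs N xi xi0 \<longrightarrow>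
      (\<forall>c\<in>coords N. xi c = xi0 c))"

end

theory Submission imports Defs begin

lemma UNIV_stratum: "(UNIV :: stratum set) = {SS, SSb, SbSb, SbS}"
  using stratum.exhaust by auto

lemma ev_ne0: "eventually (\<lambda>x::real. x \<noteq> 0) (at 0)"
  by (simp add: eventually_at_filter)

lemma at0_nonbot: "(at (0::real)) \<noteq> bot"
  by simp

lemma cell_sum:
  assumes y: "y \<in> {0::nat,1}"
  shows "(\<Sum>u\<in>A. xi (Pic u r) * xi (Dc z u) ^ y * (1 - xi (Dc z u)) ^ (1 - y))
      = (if y = 1 then (\<Sum>u\<in>A. xi (Pic u r) * (xi (Dc z u)::real))
         else (\<Sum>u\<in>A. xi (Pic u r)) - (\<Sum>u\<in>A. xi (Pic u r) * xi (Dc z u)))"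
proof (cases "y = 0")
  case True then show ?thesis by (simp add: sum_subtractf[symmetric] right_diff_distrib)
next
  case False then have "y = 1" using y by auto
  then show ?thesis by simp
qed

lemma same_obs_crit:
  assumes "\<forall>r\<in>{1..N}. X (Pc r) = xi0 (Pc r) \<and> X (Ac r) = xi0 (Ac r)"
    and "\<forall>r\<in>{1..N}. \<forall>z\<in>{0,1}. \<forall>s\<in>{0,1}.
        (\<Sum>u\<in>Ostr z s. X (Pic u r)) = (\<Sum>u\<in>Ostr z s. xi0 (Pic u r)) \<and>
        (\<Sum>u\<in>Ostr z s. X (Pic u r) * X (Dc z u)) = (\<Sum>u\<in>Ostr z s. xi0 (Pic u r) * xi0 (Dc z u))"
  shows "same_obs N X xi0"
  unfolding same_obs_def
proof (intro ballI)
  fix r z s y assume r: "r \<in> {1..N}" and z: "z \<in> {0::nat,1}" and s: "s \<in> {0::nat,1}" and y: "y \<in> {0::nat,1}"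
  note e = cell_sum[OF y, of _ r z "Ostr z s"]
  show "cellprob X r z s y = cellprob xi0 r z s y"
  proof -
    have h: "(\<Sum>u\<in>Ostr z s. X (Pic u r)) = (\<Sum>u\<in>Ostr z s. xi0 (Pic u r))"
       "(\<Sum>u\<in>Ostr z s. X (Pic u r) * X (Dc z u)) = (\<Sum>u\<in>Ostr z s. xi0 (Pic u r) * xi0 (Dc z u))"
      "X (Pc r) = xi0 (Pc r)" "X (Ac r) = xi0 (Ac r)"
      using assms r z s by blast+
    show ?thesis unfolding cellprob_def e by (simp only: h)
  qed
qed

lemma nonid:
  fixes X :: "real \<Rightarrow> coord \<Rightarrow> real"
  assumes "finite C" and out: "\<And>\<epsilon> c. c \<notin> C \<Longrightarrow> X \<epsilon> c = xi0 c"
    and lim: "\<And>c. c \<in> C \<Longrightarrow> ((\<lambda>\<epsilon>. X \<epsilon> c) \<longlongrightarrow> xi0 c) (at 0)"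
    and ev: "eventually (\<lambda>\<epsilon>. X \<epsilon> \<in> Xi N \<and> same_obs N (X \<epsilon>) xi0 \<and> (\<exists>c\<in>coords N. X \<epsilon> c \<noteq> xi0 c)) (at 0)"
  shows "\<not> locally_identifiable N xi0"
  unfolding locally_identifiable_def
proof
  assume "\<exists>e>0. \<forall>xi\<in>Xi N. (\<forall>c\<in>coords N. \<bar>xi c - xi0 c\<bar> < e) \<and> same_obs N xi xi0 \<longrightarrow> (\<forall>c\<in>coords N. xi c = xi0 c)"
  then obtain e where e: "e > 0" and H: "\<forall>xi\<in>Xi N. (\<forall>c\<in>coords N. \<bar>xi c - xi0 c\<bar> < e) \<and> same_obs N xi xi0 \<longrightarrow> (\<forall>c\<in>coords N. xi c = xi0 c)" by blast
  have "\<forall>c\<in>C. eventually (\<lambda>\<epsilon>. \<bar>X \<epsilon> c - xi0 c\<bar> < e) (at 0)"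
  proof
    fix c assume "c \<in> C"
    from lim[OF this] have "eventually (\<lambda>\<epsilon>. dist (X \<epsilon> c) (xi0 c) < e) (at 0)"
      using e tendstoD by blast
    then show "eventually (\<lambda>\<epsilon>. \<bar>X \<epsilon> c - xi0 c\<bar> < e) (at 0)" by (simp add: dist_real_def)
  qed
  then have "eventually (\<lambda>\<epsilon>. \<forall>c\<in>C. \<bar>X \<epsilon> c - xi0 c\<bar> < e) (at 0)"
    using assms(1) by (rule eventually_ball_finite[rotated])
  with ev have "eventually (\<lambda>\<epsilon>. (\<forall>c\<in>C. \<bar>X \<epsilon> c - xi0 c\<bar> < e) \<and> X \<epsilon> \<in> Xi N \<and> same_obs N (X \<epsilon>) xi0 \<and> (\<exists>c\<in>coords N. X \<epsilon> c \<noteq> xi0 c)) (at 0)"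
    by (simp add: eventually_conj_iff)
  from eventually_happens[OF this] obtain \<epsilon> where
    a: "\<forall>c\<in>C. \<bar>X \<epsilon> c - xi0 c\<bar> < e" "X \<epsilon> \<in> Xi N" "same_obs N (X \<epsilon>) xi0" "\<exists>c\<in>coords N. X \<epsilon> c \<noteq> xi0 c"
    by auto
  have "\<forall>c\<in>coords N. \<bar>X \<epsilon> c - xi0 c\<bar> < e"
    using a(1) out e by (metis abs_zero diff_self)
  with H a show False by blast
qed

lemma Xi_ev:
  fixes X :: "real \<Rightarrow> coord \<Rightarrow> real"
  assumes xi0: "xi0 \<in> Xi N" and "finite C" and out: "\<And>\<epsilon> c. c \<notin> C \<Longrightarrow> X \<epsilon> c = xi0 c"
    and lim: "\<And>c. c \<in> C \<Longrightarrow> ((\<lambda>\<epsilon>. X \<epsilon> c) \<longlongrightarrow> xi0 c) (at 0)"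
    and noP: "\<And>r. Pc r \<notin> C"
    and sums: "\<And>\<epsilon> r. (\<Sum>u\<in>UNIV. X \<epsilon> (Pic u r)) = (\<Sum>u\<in>UNIV. xi0 (Pic u r))"
  shows "eventually (\<lambda>\<epsilon>. X \<epsilon> \<in> Xi N) (at 0)"
proof -
  have "\<forall>c\<in>C. eventually (\<lambda>\<epsilon>. (0 < xi0 c \<longrightarrow> 0 < X \<epsilon> c) \<and> (xi0 c < 1 \<longrightarrow> X \<epsilon> c < 1)) (at 0)"
  proof
    fix c assume c: "c \<in> C"
    have 1: "eventually (\<lambda>\<epsilon>. 0 < xi0 c \<longrightarrow> 0 < X \<epsilon> c) (at 0)"
    proof (cases "0 < xi0 c")
      case True then show ?thesis using order_tendstoD(1)[OF lim[OF c] True] by (auto elim: eventually_mono)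
    qed simp
    have 2: "eventually (\<lambda>\<epsilon>. xi0 c < 1 \<longrightarrow> X \<epsilon> c < 1) (at 0)"
    proof (cases "xi0 c < 1")
      case True then show ?thesis using order_tendstoD(2)[OF lim[OF c] True] by (auto elim: eventually_mono)
    qed simp
    show "eventually (\<lambda>\<epsilon>. (0 < xi0 c \<longrightarrow> 0 < X \<epsilon> c) \<and> (xi0 c < 1 \<longrightarrow> X \<epsilon> c < 1)) (at 0)"
      using 1 2 by (simp add: eventually_conj_iff)
  qed
  then have "eventually (\<lambda>\<epsilon>. \<forall>c\<in>C. (0 < xi0 c \<longrightarrow> 0 < X \<epsilon> c) \<and> (xi0 c < 1 \<longrightarrow> X \<epsilon> c < 1)) (at 0)"
    using assms(2) by (rule eventually_ball_finite[rotated])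
  then show ?thesis
  proof (rule eventually_mono)
    fix \<epsilon> assume h: "\<forall>c\<in>C. (0 < xi0 c \<longrightarrow> 0 < X \<epsilon> c) \<and> (xi0 c < 1 \<longrightarrow> X \<epsilon> c < 1)"
    have h': "\<And>c. (0 < xi0 c \<longrightarrow> 0 < X \<epsilon> c) \<and> (xi0 c < 1 \<longrightarrow> X \<epsilon> c < 1)"
      using h out by metis
    have P: "\<And>r. X \<epsilon> (Pc r) = xi0 (Pc r)" using out noP by blast
    show "X \<epsilon> \<in> Xi N"
      using xi0 h' unfolding Xi_def by (simp add: P sums)
  qed
qed

lemma Ostr_disj: "z \<in> {0,1} \<Longrightarrow> s \<in> {0,1} \<Longrightarrow> s' \<in> {0,1} \<Longrightarrow> s \<noteq> s' \<Longrightarrow> Ostr z s \<inter> Ostr z s' = {}"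
  by auto

lemma Xi_N_pos: "xi0 \<in> Xi N \<Longrightarrow> 1 \<le> N"
  unfolding Xi_def by (cases N) auto

lemma Xi_pic: "xi0 \<in> Xi N \<Longrightarrow> r \<in> {1..N} \<Longrightarrow> 0 < xi0 (Pic u r)"
  unfolding Xi_def by auto

lemma caseA:
  assumes xi0: "xi0 \<in> Xi N" and z: "z \<in> {0,1}" and s: "s \<in> {0,1}"
    and O: "Ostr z s = {u, u'}" and uu: "u \<noteq> u'"
    and sing: "\<forall>r\<in>{1..N}. xi0 (Pic u r) * xi0 (Pic u' 1) = xi0 (Pic u' r) * xi0 (Pic u 1)"
  shows "\<not> locally_identifiable N xi0"
proof -
  define X where "X = (\<lambda>\<epsilon>::real. xi0(Dc z u := xi0 (Dc z u) + \<epsilon> * xi0 (Pic u' 1),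
                               Dc z u' := xi0 (Dc z u') - \<epsilon> * xi0 (Pic u 1)))"
  define C where "C = {Dc z u, Dc z u'}"
  have N1: "1 \<in> {1..N}" using Xi_N_pos[OF xi0] by auto
  have pos: "0 < xi0 (Pic u' 1)" using Xi_pic[OF xi0 N1] .
  have fin: "finite C" unfolding C_def by simp
  have out: "\<And>\<epsilon> c. c \<notin> C \<Longrightarrow> X \<epsilon> c = xi0 c" unfolding X_def C_def by auto
  have lim: "\<And>c. c \<in> C \<Longrightarrow> ((\<lambda>\<epsilon>. X \<epsilon> c) \<longlongrightarrow> xi0 c) (at 0)"
  proof -
    fix c assume "c \<in> C"
    then consider "c = Dc z u" | "c = Dc z u'" unfolding C_def by blast
    then show "((\<lambda>\<epsilon>. X \<epsilon> c) \<longlongrightarrow> xi0 c) (at 0)"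
    proof cases
      case 1
      have "((\<lambda>\<epsilon>. xi0 (Dc z u) + \<epsilon> * xi0 (Pic u' 1)) \<longlongrightarrow> xi0 (Dc z u) + 0 * xi0 (Pic u' 1)) (at 0)"
        by (intro tendsto_intros)
      then show ?thesis using 1 uu by (simp add: X_def)
    next
      case 2
      have "((\<lambda>\<epsilon>. xi0 (Dc z u') - \<epsilon> * xi0 (Pic u 1)) \<longlongrightarrow> xi0 (Dc z u') - 0 * xi0 (Pic u 1)) (at 0)"
        by (intro tendsto_intros)
      then show ?thesis using 2 uu by (simp add: X_def)
    qed
  qed
  have noP: "\<And>r. Pc r \<notin> C" unfolding C_def by auto
  have sums: "\<And>\<epsilon> r. (\<Sum>u\<in>UNIV. X \<epsilon> (Pic u r)) = (\<Sum>u\<in>UNIV. xi0 (Pic u r))"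
    unfolding X_def by simp
  have evX: "eventually (\<lambda>\<epsilon>. X \<epsilon> \<in> Xi N) (at 0)"
    by (rule Xi_ev[OF xi0 fin out lim noP sums])
  have so: "same_obs N (X \<epsilon>) xi0" for \<epsilon>
  proof (rule same_obs_crit)
    show "\<forall>r\<in>{1..N}. X \<epsilon> (Pc r) = xi0 (Pc r) \<and> X \<epsilon> (Ac r) = xi0 (Ac r)"
      unfolding X_def by simp
    show "\<forall>r\<in>{1..N}. \<forall>z'\<in>{0,1}. \<forall>s'\<in>{0,1}.
        (\<Sum>v\<in>Ostr z' s'. X \<epsilon> (Pic v r)) = (\<Sum>v\<in>Ostr z' s'. xi0 (Pic v r)) \<and>
        (\<Sum>v\<in>Ostr z' s'. X \<epsilon> (Pic v r) * X \<epsilon> (Dc z' v)) = (\<Sum>v\<in>Ostr z' s'. xi0 (Pic v r) * xi0 (Dc z' v))"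
    proof (intro ballI conjI)
      fix r z' s' assume r: "r \<in> {1..N}" and z': "z' \<in> {0::nat,1}" and s': "s' \<in> {0::nat,1}"
      show "(\<Sum>v\<in>Ostr z' s'. X \<epsilon> (Pic v r)) = (\<Sum>v\<in>Ostr z' s'. xi0 (Pic v r))"
        unfolding X_def by simp
      show "(\<Sum>v\<in>Ostr z' s'. X \<epsilon> (Pic v r) * X \<epsilon> (Dc z' v)) = (\<Sum>v\<in>Ostr z' s'. xi0 (Pic v r) * xi0 (Dc z' v))"
      proof (cases "z' = z \<and> s' = s")
        case True
        have "xi0 (Pic u r) * (xi0 (Dc z u) + \<epsilon> * xi0 (Pic u' 1)) + xi0 (Pic u' r) * (xi0 (Dc z u') - \<epsilon> * xi0 (Pic u 1))
            = xi0 (Pic u r) * xi0 (Dc z u) + xi0 (Pic u' r) * xi0 (Dc z u') + \<epsilon> * (xi0 (Pic u r) * xi0 (Pic u' 1) - xi0 (Pic u' r) * xi0 (Pic u 1))"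
          by (simp add: algebra_simps)
        also have "\<dots> = xi0 (Pic u r) * xi0 (Dc z u) + xi0 (Pic u' r) * xi0 (Dc z u')"
          using sing r by simp
        finally show ?thesis using True O uu by (simp add: X_def)
      next
        case False
        have "\<forall>v\<in>Ostr z' s'. X \<epsilon> (Dc z' v) = xi0 (Dc z' v)"
        proof (cases "z' = z")
          case True
          with False have "s' \<noteq> s" by blast
          then have "Ostr z' s' \<inter> {u, u'} = {}" using Ostr_disj[OF z s s'] O True by auto
          then have "\<And>v. v \<in> Ostr z' s' \<Longrightarrow> v \<noteq> u \<and> v \<noteq> u'" by blast
          then show ?thesis unfolding X_def using True by (auto simp del: Ostr.simps)
        next
          case False then show ?thesis unfolding X_def by auto
        qed
        then show ?thesis unfolding X_def by (intro sum.cong) auto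
      qed
    qed
  qed
  have dif: "\<epsilon> \<noteq> 0 \<Longrightarrow> \<exists>c\<in>coords N. X \<epsilon> c \<noteq> xi0 c" for \<epsilon>
  proof
    assume "\<epsilon> \<noteq> 0"
    then show "X \<epsilon> (Dc z u) \<noteq> xi0 (Dc z u)" using pos uu by (simp add: X_def)
    show "Dc z u \<in> coords N" using z unfolding coords_def by blast
  qed
  have "eventually (\<lambda>\<epsilon>. X \<epsilon> \<in> Xi N \<and> same_obs N (X \<epsilon>) xi0 \<and> (\<exists>c\<in>coords N. X \<epsilon> c \<noteq> xi0 c)) (at 0)"
    using evX ev_ne0 by eventually_elim (use so dif in auto)
  then show ?thesis using nonid[of C X xi0 N] fin out lim by blast
qed

definition kfun :: "real \<Rightarrow> real \<Rightarrow> real \<Rightarrow> real \<Rightarrow> real" where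
  "kfun A B D \<epsilon> = - \<epsilon> * A / (D + \<epsilon> * B)"

lemma kfun_lim: "D \<noteq> 0 \<Longrightarrow> ((\<lambda>\<epsilon>. kfun A B D \<epsilon>) \<longlongrightarrow> 0) (at 0)"
proof -
  assume D: "D \<noteq> 0"
  have "((\<lambda>\<epsilon>. - \<epsilon> * A / (D + \<epsilon> * B)) \<longlongrightarrow> - 0 * A / (D + 0 * B)) (at 0)"
    using D by (intro tendsto_intros) auto
  then show ?thesis by (simp add: kfun_def)
qed

lemma kfun_den: "D \<noteq> 0 \<Longrightarrow> eventually (\<lambda>\<epsilon>::real. D + \<epsilon> * B \<noteq> 0) (at 0)"
proof -
  assume D: "D \<noteq> 0"
  have "((\<lambda>\<epsilon>. D + \<epsilon> * B) \<longlongrightarrow> D + 0 * B) (at 0)" by (intro tendsto_intros)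
  then have "((\<lambda>\<epsilon>. D + \<epsilon> * B) \<longlongrightarrow> D) (at 0)" by simp
  then show ?thesis using D tendsto_imp_eventually_ne by blast
qed

lemma pair_id1:
  assumes "D + \<epsilon> * (P2 + Q2) \<noteq> 0" "D = P1 * Q2 - Q1 * P2"
  shows "(P1 + \<epsilon>) * (a0 + Q2 * kfun (a0 - b0) (P2 + Q2) D \<epsilon>) + (Q1 - \<epsilon>) * (b0 - P2 * kfun (a0 - b0) (P2 + Q2) D \<epsilon>)
       = P1 * a0 + Q1 * (b0::real)"
proof -
  define k where "k = kfun (a0 - b0) (P2 + Q2) D \<epsilon>"
  have hk: "k * (D + \<epsilon> * (P2 + Q2)) = - \<epsilon> * (a0 - b0)"
    using assms(1) unfolding k_def kfun_def by simp
  have "(P1 + \<epsilon>) * (a0 + Q2 * k) + (Q1 - \<epsilon>) * (b0 - P2 * k)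
      = P1 * a0 + Q1 * b0 + (\<epsilon> * (a0 - b0) + k * (D + \<epsilon> * (P2 + Q2)))"
    unfolding assms(2) by (simp add: algebra_simps)
  also have "\<dots> = P1 * a0 + Q1 * b0" using hk by simp
  finally show ?thesis unfolding k_def .
qed

lemma pair_id2:
  shows "P2 * (a0 + Q2 * k) + Q2 * (b0 - P2 * k) = P2 * a0 + Q2 * (b0::real)"
  by (simp add: algebra_simps)

lemma caseB:
  assumes xi0: "xi0 \<in> Xi 2"
  defines "p \<equiv> \<lambda>u r. xi0 (Pic u r)" and "d \<equiv> \<lambda>z u. xi0 (Dc z u)"
  defines "D1 \<equiv> p SS 1 * p SSb 2 - p SSb 1 * p SS 2"
    and "D2 \<equiv> p SbSb 1 * p SbS 2 - p SbS 1 * p SbSb 2"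
    and "D3 \<equiv> p SS 1 * p SbS 2 - p SbS 1 * p SS 2"
    and "D4 \<equiv> p SbSb 1 * p SSb 2 - p SSb 1 * p SbSb 2"
  assumes nz: "D1 \<noteq> 0" "D2 \<noteq> 0" "D3 \<noteq> 0" "D4 \<noteq> 0"
  shows "\<not> locally_identifiable 2 xi0"
proof -
  define k1 where "k1 = kfun (d 1 SS - d 1 SSb) (p SS 2 + p SSb 2) D1"
  define k2 where "k2 = kfun (d 1 SbSb - d 1 SbS) (p SbSb 2 + p SbS 2) D2"
  define k3 where "k3 = kfun (d 0 SS - d 0 SbS) (p SS 2 + p SbS 2) D3"
  define k4 where "k4 = kfun (d 0 SbSb - d 0 SSb) (p SbSb 2 + p SSb 2) D4"
  define X where "X = (\<lambda>\<epsilon>::real. xi0(Pic SS 1 := p SS 1 + \<epsilon>, Pic SSb 1 := p SSb 1 - \<epsilon>,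
      Pic SbSb 1 := p SbSb 1 + \<epsilon>, Pic SbS 1 := p SbS 1 - \<epsilon>,
      Dc 1 SS := d 1 SS + p SSb 2 * k1 \<epsilon>, Dc 1 SSb := d 1 SSb - p SS 2 * k1 \<epsilon>,
      Dc 1 SbSb := d 1 SbSb + p SbS 2 * k2 \<epsilon>, Dc 1 SbS := d 1 SbS - p SbSb 2 * k2 \<epsilon>,
      Dc 0 SS := d 0 SS + p SbS 2 * k3 \<epsilon>, Dc 0 SbS := d 0 SbS - p SS 2 * k3 \<epsilon>,
      Dc 0 SbSb := d 0 SbSb + p SSb 2 * k4 \<epsilon>, Dc 0 SSb := d 0 SSb - p SbSb 2 * k4 \<epsilon>))"
  define C where "C = {Pic SS 1, Pic SSb 1, Pic SbSb 1, Pic SbS 1, Dc 1 SS, Dc 1 SSb, Dc 1 SbSb, Dc 1 SbS,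
     Dc 0 SS, Dc 0 SbS, Dc 0 SbSb, Dc 0 SSb}"
  have fin: "finite C" unfolding C_def by simp
  have out: "\<And>\<epsilon> c. c \<notin> C \<Longrightarrow> X \<epsilon> c = xi0 c" unfolding X_def C_def by auto
  have l1: "(k1 \<longlongrightarrow> 0) (at 0)" unfolding k1_def using nz(1) by (rule kfun_lim)
  have l2: "(k2 \<longlongrightarrow> 0) (at 0)" unfolding k2_def using nz(2) by (rule kfun_lim)
  have l3: "(k3 \<longlongrightarrow> 0) (at 0)" unfolding k3_def using nz(3) by (rule kfun_lim)
  have l4: "(k4 \<longlongrightarrow> 0) (at 0)" unfolding k4_def using nz(4) by (rule kfun_lim)
  have lp: "((\<lambda>\<epsilon>::real. a + c * f \<epsilon>) \<longlongrightarrow> a) (at 0)" "((\<lambda>\<epsilon>::real. a - c * f \<epsilon>) \<longlongrightarrow> a) (at 0)"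
    if "(f \<longlongrightarrow> 0) (at 0)" for a c :: real and f
    using tendsto_add[OF tendsto_const tendsto_mult[OF tendsto_const that], of a c]
      tendsto_diff[OF tendsto_const tendsto_mult[OF tendsto_const that], of a c] by simp_all
  have le: "((\<lambda>\<epsilon>::real. a + \<epsilon>) \<longlongrightarrow> a) (at 0)" "((\<lambda>\<epsilon>::real. a - \<epsilon>) \<longlongrightarrow> a) (at 0)" for a :: real
    using lp[of "\<lambda>x. x" a 1] by (simp_all add: tendsto_ident_at)
  have lim: "\<And>c. c \<in> C \<Longrightarrow> ((\<lambda>\<epsilon>. X \<epsilon> c) \<longlongrightarrow> xi0 c) (at 0)"
    unfolding C_def using lp[OF l1] lp[OF l2] lp[OF l3] lp[OF l4] le
    by (auto simp: X_def p_def d_def)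
  have noP: "\<And>r. Pc r \<notin> C" unfolding C_def by auto
  have sums: "\<And>\<epsilon> r. (\<Sum>u\<in>UNIV. X \<epsilon> (Pic u r)) = (\<Sum>u\<in>UNIV. xi0 (Pic u r))"
    unfolding X_def UNIV_stratum by (auto simp: p_def)
  have evX: "eventually (\<lambda>\<epsilon>. X \<epsilon> \<in> Xi 2) (at 0)"
    by (rule Xi_ev[OF xi0 fin out lim noP sums])
  have so: "same_obs 2 (X \<epsilon>) xi0"
    if den: "D1 + \<epsilon> * (p SS 2 + p SSb 2) \<noteq> 0" "D2 + \<epsilon> * (p SbSb 2 + p SbS 2) \<noteq> 0"
            "D3 + \<epsilon> * (p SS 2 + p SbS 2) \<noteq> 0" "D4 + \<epsilon> * (p SbSb 2 + p SSb 2) \<noteq> 0" for \<epsilon>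
  proof (rule same_obs_crit)
    note e1 = pair_id1[OF den(1) D1_def[THEN meta_eq_to_obj_eq], of "d 1 SS" "d 1 SSb", folded k1_def]
    note e2 = pair_id1[OF den(2) D2_def[THEN meta_eq_to_obj_eq], of "d 1 SbSb" "d 1 SbS", folded k2_def]
    note e3 = pair_id1[OF den(3) D3_def[THEN meta_eq_to_obj_eq], of "d 0 SS" "d 0 SbS", folded k3_def]
    note e4 = pair_id1[OF den(4) D4_def[THEN meta_eq_to_obj_eq], of "d 0 SbSb" "d 0 SSb", folded k4_def]
    show "\<forall>r\<in>{1..2}. X \<epsilon> (Pc r) = xi0 (Pc r) \<and> X \<epsilon> (Ac r) = xi0 (Ac r)"
      unfolding X_def by simp
    show "\<forall>r\<in>{1..2}. \<forall>z'\<in>{0,1}. \<forall>s'\<in>{0,1}.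
        (\<Sum>v\<in>Ostr z' s'. X \<epsilon> (Pic v r)) = (\<Sum>v\<in>Ostr z' s'. xi0 (Pic v r)) \<and>
        (\<Sum>v\<in>Ostr z' s'. X \<epsilon> (Pic v r) * X \<epsilon> (Dc z' v)) = (\<Sum>v\<in>Ostr z' s'. xi0 (Pic v r) * xi0 (Dc z' v))"
    proof (intro ballI)
      fix r z' s' assume r: "r \<in> {1..2::nat}" and z': "z' \<in> {0::nat,1}" and s': "s' \<in> {0::nat,1}"
      from r have "r = 1 \<or> r = 2" by auto
      with z' s' show "(\<Sum>v\<in>Ostr z' s'. X \<epsilon> (Pic v r)) = (\<Sum>v\<in>Ostr z' s'. xi0 (Pic v r)) \<and>
        (\<Sum>v\<in>Ostr z' s'. X \<epsilon> (Pic v r) * X \<epsilon> (Dc z' v)) = (\<Sum>v\<in>Ostr z' s'. xi0 (Pic v r) * xi0 (Dc z' v))"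
        apply (elim disjE insertE)
        using e1 e2 e3 e4 by (simp_all add: X_def p_def d_def algebra_simps)
    qed
  qed
  have dif: "\<epsilon> \<noteq> 0 \<Longrightarrow> \<exists>c\<in>coords 2. X \<epsilon> c \<noteq> xi0 c" for \<epsilon>
  proof
    assume "\<epsilon> \<noteq> 0"
    then show "X \<epsilon> (Pic SS 1) \<noteq> xi0 (Pic SS 1)" by (simp add: X_def p_def)
    show "Pic SS 1 \<in> coords 2" unfolding coords_def by auto
  qed
  have "eventually (\<lambda>\<epsilon>. X \<epsilon> \<in> Xi 2 \<and> same_obs 2 (X \<epsilon>) xi0 \<and> (\<exists>c\<in>coords 2. X \<epsilon> c \<noteq> xi0 c)) (at 0)"
    using evX ev_ne0 kfun_den[OF nz(1), of "p SS 2 + p SSb 2"] kfun_den[OF nz(2), of "p SbSb 2 + p SbS 2"]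
      kfun_den[OF nz(3), of "p SS 2 + p SbS 2"] kfun_den[OF nz(4), of "p SbSb 2 + p SSb 2"]
    by eventually_elim (use so dif in auto)
  then show ?thesis using nonid[of C X xi0 2] fin out lim by blast
qed

theorem proposition2:
  fixes N :: nat and xi0 :: "coord \<Rightarrow> real"
  assumes "N \<le> 2" and "xi0 \<in> Xi N"
  shows "\<not> locally_identifiable N xi0"
proof -
  have N1: "1 \<le> N" using Xi_N_pos[OF assms(2)] .
  have sing: "\<forall>r\<in>{1..N}. xi0 (Pic u r) * xi0 (Pic u' 1) = xi0 (Pic u' r) * xi0 (Pic u 1)"
    if "N = 1 \<or> xi0 (Pic u 1) * xi0 (Pic u' 2) - xi0 (Pic u' 1) * xi0 (Pic u 2) = 0" for u u'
  proof
    fix r assume r: "r \<in> {1..N}"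
    then have "r = 1 \<or> (r = 2 \<and> N = 2)" using assms(1) by auto
    then show "xi0 (Pic u r) * xi0 (Pic u' 1) = xi0 (Pic u' r) * xi0 (Pic u 1)"
      using that r by (auto simp: algebra_simps)
  qed
  show ?thesis
  proof (cases "N = 1")
    case True
    show ?thesis by (rule caseA[OF assms(2), of 1 1 SS SSb]) (use sing True in auto)
  next
    case False
    then have N2: "N = 2" using N1 assms(1) by auto
    show ?thesis
    proof (cases "xi0 (Pic SS 1) * xi0 (Pic SSb 2) - xi0 (Pic SSb 1) * xi0 (Pic SS 2) = 0")
      case True
      show ?thesis by (rule caseA[OF assms(2), of 1 1 SS SSb]) (use sing True in auto)
    next
      case F1: False
      show ?thesis
      proof (cases "xi0 (Pic SbSb 1) * xi0 (Pic SbS 2) - xi0 (Pic SbS 1) * xi0 (Pic SbSb 2) = 0")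
        case True
        show ?thesis by (rule caseA[OF assms(2), of 1 0 SbSb SbS]) (use sing True in auto)
      next
        case F2: False
        show ?thesis
        proof (cases "xi0 (Pic SS 1) * xi0 (Pic SbS 2) - xi0 (Pic SbS 1) * xi0 (Pic SS 2) = 0")
          case True
          show ?thesis by (rule caseA[OF assms(2), of 0 1 SS SbS]) (use sing True in auto)
        next
          case F3: False
          show ?thesis
          proof (cases "xi0 (Pic SbSb 1) * xi0 (Pic SSb 2) - xi0 (Pic SSb 1) * xi0 (Pic SbSb 2) = 0")
            case True
            show ?thesis by (rule caseA[OF assms(2), of 0 0 SbSb SSb]) (use sing True in auto)
          next
            case F4: False
            show ?thesis unfolding N2 by (rule caseB) (use assms(2) N2 F1 F2 F3 F4 in auto)
          qed
        qed
      qed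
    qed
  qed
qed

end
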